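(* Generalized PAV does not satisfy EJR-M: there exists an instance and an allocation selected by Generalized PAV that violates EJR-M.
   Context: Model: There is a set of agents $N=\{1,\dots,n\}$. The resource $R$ consists of a cake $C=[0,c]$ for a real $c\ge 0$ and a set of indivisible goods $G=\{g_1,\dots,g_m\}$ for an integer $m\ge 0$, with $\max(c,m)>0$. A piece of cake is a union of finitely many disjoint closed subintervals of $C$; its length $\ell(\cdot)$ is the sum of the lengths of its intervals. A bundle $R'=(C',G')$ consists of a piece of cake $C'\subseteq C$ and a set $G'\subseteq G$; its size is $s(R')=\ell(C')+|G'|$. Each agent $i$ approves a bundle $R_i=(C_i,G_i)$, and her utility for a bundle $R'$ is $u_i(R')=\ell(C_i\cap C')+|G_i\cap G'|$. A parameter $\alpha\in(0,c+m]$ is given; an allocation is a bundle $A$ with $s(A)\le\alpha$. For a real $t>0$, $N^*\subseteq N$ is $t$-cohesive if $|N^*|\ge t n/\alpha$ and $s(\bigcap_{i\in N^*}R_i)\ge t$. EJR-M: an allocation $A$ satisfies EJR-M if for every real $t>0$ and every $t$-cohesive group $N^*$ for which there exists a bundle $R^*\subseteq R$ with $s(R^* )=t$ and $R^*\subseteq R_i$ for all $i\in N^*$, there is $j\in N^*$ with $u_j(A)\ge t$. Generalized harmonic numbers: $H_x\coloneqq\sum_{k=1}^\infty\frac{x}{k(x+k)}$ for real $x\ge0$. Generalized PAV selects an allocation $R'$ with $s(R')\le\alpha$ maximizing $\sum_{i\in N}H_{u_i(R')}$. *)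

theory Defs
  imports "HOL-Analysis.Analysis"
begin

text \<open>Agents are 0,...,n-1; goods are 0,...,m-1; the cake is [0,c].
  A bndl is a pair (piece of cake, set of goods).\<close>

type_synonym bndl = "real set \<times> nat set"

definition is_piece :: "real \<Rightarrow> real set \<Rightarrow> bool" where
  "is_piece c S \<longleftrightarrow> (\<exists>ivs :: (real \<times> real) list.
      (\<forall>k<length ivs. 0 \<le> fst (ivs!k) \<and> fst (ivs!k) \<le> snd (ivs!k) \<and> snd (ivs!k) \<le> c)
    \<and> (\<forall>k<length ivs. \<forall>l<length ivs. k \<noteq> l \<longrightarrow>
          {fst (ivs!k)..snd (ivs!k)} \<inter> {fst (ivs!l)..snd (ivs!l)} = {})
    \<and> S = (\<Union>k<length ivs. {fst (ivs!k)..snd (ivs!k)}))"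

definition len :: "real set \<Rightarrow> real" where
  "len S = measure lborel S"

definition is_bundle :: "real \<Rightarrow> nat \<Rightarrow> bndl \<Rightarrow> bool" where
  "is_bundle c m B \<longleftrightarrow> is_piece c (fst B) \<and> snd B \<subseteq> {0..<m}"

definition bsize :: "bndl \<Rightarrow> real" where
  "bsize B = len (fst B) + real (card (snd B))"

definition bsubseteq :: "bndl \<Rightarrow> bndl \<Rightarrow> bool" where
  "bsubseteq B B' \<longleftrightarrow> fst B \<subseteq> fst B' \<and> snd B \<subseteq> snd B'"

definition util :: "bndl \<Rightarrow> bndl \<Rightarrow> real" where
  "util Ri B = len (fst Ri \<inter> fst B) + real (card (snd Ri \<inter> snd B))"

definition binter :: "(nat \<Rightarrow> bndl) \<Rightarrow> nat set \<Rightarrow> bndl" where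
  "binter R S = ((\<Inter>i\<in>S. fst (R i)), (\<Inter>i\<in>S. snd (R i)))"

definition valid_instance :: "nat \<Rightarrow> real \<Rightarrow> nat \<Rightarrow> real \<Rightarrow> (nat \<Rightarrow> bndl) \<Rightarrow> bool" where
  "valid_instance n c m \<alpha> R \<longleftrightarrow> n \<ge> 1 \<and> c \<ge> 0 \<and> max c (real m) > 0
     \<and> 0 < \<alpha> \<and> \<alpha> \<le> c + real m \<and> (\<forall>i<n. is_bundle c m (R i))"

definition is_allocation :: "real \<Rightarrow> nat \<Rightarrow> real \<Rightarrow> bndl \<Rightarrow> bool" where
  "is_allocation c m \<alpha> A \<longleftrightarrow> is_bundle c m A \<and> bsize A \<le> \<alpha>"

definition t_cohesive :: "nat \<Rightarrow> real \<Rightarrow> (nat \<Rightarrow> bndl) \<Rightarrow> real \<Rightarrow> nat set \<Rightarrow> bool" where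
  "t_cohesive n \<alpha> R t Ns \<longleftrightarrow> Ns \<subseteq> {0..<n} \<and> real (card Ns) \<ge> t * real n / \<alpha>
     \<and> bsize (binter R Ns) \<ge> t"

definition EJR_M :: "nat \<Rightarrow> real \<Rightarrow> nat \<Rightarrow> real \<Rightarrow> (nat \<Rightarrow> bndl) \<Rightarrow> bndl \<Rightarrow> bool" where
  "EJR_M n c m \<alpha> R A \<longleftrightarrow> (\<forall>t>0. \<forall>Ns. t_cohesive n \<alpha> R t Ns \<longrightarrow>
      (\<exists>Rs. is_bundle c m Rs \<and> bsize Rs = t \<and> (\<forall>i\<in>Ns. bsubseteq Rs (R i))) \<longrightarrow>
      (\<exists>j\<in>Ns. util (R j) A \<ge> t))"

definition genH :: "real \<Rightarrow> real" where
  "genH x = (\<Sum>k. x / (real (Suc k) * (x + real (Suc k))))"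

definition PAV_score :: "nat \<Rightarrow> (nat \<Rightarrow> bndl) \<Rightarrow> bndl \<Rightarrow> real" where
  "PAV_score n R B = (\<Sum>i<n. genH (util (R i) B))"

definition gen_PAV_selects :: "nat \<Rightarrow> real \<Rightarrow> nat \<Rightarrow> real \<Rightarrow> (nat \<Rightarrow> bndl) \<Rightarrow> bndl \<Rightarrow> bool" where
  "gen_PAV_selects n c m \<alpha> R A \<longleftrightarrow> is_allocation c m \<alpha> A \<and>
     (\<forall>B. is_allocation c m \<alpha> B \<longrightarrow> PAV_score n R B \<le> PAV_score n R A)"

end

theory Submission
  imports Defs
begin

lemma genH0: "genH 0 = 0"
  unfolding genH_def by simp

lemma tele1: "(\<lambda>k::nat. 1 / (real (Suc k) * (1 + real (Suc k)))) sums 1"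
proof -
  have lim: "(\<lambda>n::nat. 1 / real (Suc n)) \<longlonglongrightarrow> 0"
    using LIMSEQ_Suc[OF lim_1_over_n] by simp
  have "(\<lambda>n::nat. 1 / real (Suc n) - 1 / real (Suc (Suc n))) sums (1 / real (Suc 0) - 0)"
    by (rule telescope_sums'[OF lim])
  moreover have "\<And>k::nat. 1 / real (Suc k) - 1 / real (Suc (Suc k)) = 1 / (real (Suc k) * (1 + real (Suc k)))"
    by (simp add: field_simps)
  ultimately show ?thesis by simp
qed

lemma genH1: "genH 1 = 1"
  unfolding genH_def using tele1 by (simp add: sums_iff)

lemma genH_le1:
  assumes "0 \<le> x" "x \<le> 1"
  shows "genH x \<le> 1"
proof -
  have le: "\<And>k::nat. x / (real (Suc k) * (x + real (Suc k))) \<le> 1 / (real (Suc k) * (1 + real (Suc k)))"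
  proof -
    fix k :: nat
    have p: "0 < real (Suc k) * (x + real (Suc k))" "0 < real (Suc k) * (1 + real (Suc k))"
      using assms by auto
    have "x * (real (Suc k) * (1 + real (Suc k))) \<le> 1 * (real (Suc k) * (x + real (Suc k)))"
    proof -
      have "x * real (Suc k) \<le> real (Suc k)" using assms by simp
      then have h: "x * (1 + real (Suc k)) \<le> x + real (Suc k)" by (simp add: algebra_simps)
      have "real (Suc k) * (x * (1 + real (Suc k))) \<le> real (Suc k) * (x + real (Suc k))"
        by (rule mult_left_mono[OF h]) simp
      then show ?thesis by (simp add: algebra_simps)
    qed
    then have q: "x * (real (Suc k) * (1 + real (Suc k))) - 1 * (real (Suc k) * (x + real (Suc k))) \<le> 0"
      by linarith
    have r: "(x * (real (Suc k) * (1 + real (Suc k))) - 1 * (real (Suc k) * (x + real (Suc k))))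
              / ((real (Suc k) * (x + real (Suc k))) * (real (Suc k) * (1 + real (Suc k)))) \<le> 0"
      by (rule divide_nonpos_pos[OF q mult_pos_pos[OF p]])
    show "x / (real (Suc k) * (x + real (Suc k))) \<le> 1 / (real (Suc k) * (1 + real (Suc k)))"
      using frac_le_eq[of "real (Suc k) * (x + real (Suc k))" "real (Suc k) * (1 + real (Suc k))" x 1] p r
      by linarith
  qed
  have nn: "\<And>k::nat. 0 \<le> x / (real (Suc k) * (x + real (Suc k)))" using assms by simp
  have s1: "summable (\<lambda>k::nat. 1 / (real (Suc k) * (1 + real (Suc k))))"
    using tele1 by (simp add: sums_iff)
  have s: "summable (\<lambda>k::nat. x / (real (Suc k) * (x + real (Suc k))))"
  proof (rule summable_comparison_test'[OF s1])
    fix k :: nat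
    have "norm (x / (real (Suc k) * (x + real (Suc k)))) = x / (real (Suc k) * (x + real (Suc k)))"
      unfolding real_norm_def by (rule abs_of_nonneg[OF nn])
    then show "norm (x / (real (Suc k) * (x + real (Suc k)))) \<le> 1 / (real (Suc k) * (1 + real (Suc k)))"
      using le[of k] by simp
  qed
  have "genH x \<le> (\<Sum>k. 1 / (real (Suc k) * (1 + real (Suc k))))"
    unfolding genH_def by (rule suminf_le[OF le s s1])
  also have "\<dots> = 1" using tele1 by (simp add: sums_iff)
  finally show ?thesis .
qed

definition RR :: "nat \<Rightarrow> bndl" where
  "RR i = (if i = 0 then ({0..1}, {}) else ({}, {0}))"

lemma piece_Icc: "0 \<le> a \<Longrightarrow> a \<le> b \<Longrightarrow> b \<le> c \<Longrightarrow> is_piece c {a..b}"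
  unfolding is_piece_def by (rule exI[of _ "[(a,b)]"]) auto

lemma piece_empty: "is_piece c {}"
  unfolding is_piece_def by (rule exI[of _ "[]"]) auto

lemma piece_sub: "is_piece c S \<Longrightarrow> S \<subseteq> {0..c}"
proof
  fix x assume P: "is_piece c S" and x: "x \<in> S"
  then obtain ivs :: "(real \<times> real) list" where
    b: "\<forall>k<length ivs. 0 \<le> fst (ivs!k) \<and> fst (ivs!k) \<le> snd (ivs!k) \<and> snd (ivs!k) \<le> c"
    and e: "S = (\<Union>k<length ivs. {fst (ivs!k)..snd (ivs!k)})"
    unfolding is_piece_def by blast
  from x e obtain k where k: "k < length ivs" and xk: "x \<in> {fst (ivs!k)..snd (ivs!k)}" by blast
  from b k have "0 \<le> fst (ivs!k)" "snd (ivs!k) \<le> c" by auto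
  with xk show "x \<in> {0..c}" by auto
qed

theorem mainTheorem10:
  shows "\<exists>n c m \<alpha> R A. valid_instance n c m \<alpha> R \<and> gen_PAV_selects n c m \<alpha> R A
           \<and> \<not> EJR_M n c m \<alpha> R A"
proof (intro exI conjI)
  let ?A = "({} :: real set, {0::nat})"
  show "valid_instance 2 1 1 1 RR"
    unfolding valid_instance_def is_bundle_def RR_def len_def
    using piece_Icc[of 0 1 1] piece_empty[of 1] by auto
  have uA0: "util (RR 0) ?A = 0" unfolding util_def RR_def len_def by simp
  have uA1: "util (RR 1) ?A = 1" unfolding util_def RR_def len_def by simp
  have scA: "PAV_score 2 RR ?A = 1"
    unfolding PAV_score_def using uA0 uA1 genH0 genH1 by (simp add: numeral_2_eq_2)
  show "gen_PAV_selects 2 1 1 1 RR ?A"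
    unfolding gen_PAV_selects_def
  proof (intro conjI allI impI)
    show "is_allocation 1 1 1 ?A"
      unfolding is_allocation_def is_bundle_def bsize_def len_def using piece_empty[of 1] by auto
    fix B assume B: "is_allocation 1 1 1 B"
    then have pc: "is_piece 1 (fst B)" and gs: "snd B \<subseteq> {0..<1}" and sz: "bsize B \<le> 1"
      unfolding is_allocation_def is_bundle_def by auto
    have sub: "fst B \<subseteq> {0..1}" using piece_sub[OF pc] .
    define u0 where "u0 = len (fst B)"
    define u1 where "u1 = real (card (snd B))"
    have e0: "util (RR 0) B = u0" unfolding util_def RR_def u0_def using sub
      by (simp add: Int_absorb1)
    have gs': "snd B \<subseteq> {0}" using gs by auto
    have e1: "util (RR 1) B = u1" unfolding util_def RR_def u1_def len_def using gs'
      by (simp add: Int_absorb1)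
    have u0n: "0 \<le> u0" unfolding u0_def len_def by simp
    have sum: "u0 + u1 \<le> 1" using sz unfolding bsize_def u0_def u1_def .
    have u1c: "u1 = 0 \<or> u1 = 1"
    proof (cases "snd B = {}")
      case True then show ?thesis unfolding u1_def by simp
    next
      case False then have "snd B = {0}" using gs' by auto
      then show ?thesis unfolding u1_def by simp
    qed
    have "PAV_score 2 RR B = genH u0 + genH u1"
      unfolding PAV_score_def using e0 e1 by (simp add: numeral_2_eq_2)
    also have "\<dots> \<le> 1"
      using u1c
    proof
      assume "u1 = 0" then show ?thesis using genH0 genH_le1[of u0] u0n sum by simp
    next
      assume "u1 = 1" then have "u0 = 0" using u0n sum by simp
      then show ?thesis using genH0 genH1 \<open>u1 = 1\<close> by simp
    qed
    finally show "PAV_score 2 RR B \<le> PAV_score 2 RR ?A" using scA by simp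
  qed
  show "\<not> EJR_M 2 1 1 1 RR ?A"
    unfolding EJR_M_def
  proof
    assume H: "\<forall>t>0. \<forall>Ns. t_cohesive 2 1 RR t Ns \<longrightarrow>
      (\<exists>Rs. is_bundle 1 1 Rs \<and> bsize Rs = t \<and> (\<forall>i\<in>Ns. bsubseteq Rs (RR i))) \<longrightarrow>
      (\<exists>j\<in>Ns. util (RR j) ?A \<ge> t)"
    have coh: "t_cohesive 2 1 RR (1/2) {0}"
      unfolding t_cohesive_def bsize_def binter_def RR_def len_def by simp
    have ex: "\<exists>Rs. is_bundle 1 1 Rs \<and> bsize Rs = 1/2 \<and> (\<forall>i\<in>{0}. bsubseteq Rs (RR i))"
      by (rule exI[of _ "({0..1/2}, {})"])
        (use piece_Icc[of 0 "1/2" 1] in \<open>auto simp: is_bundle_def bsize_def len_def bsubseteq_def RR_def\<close>)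
    have "t_cohesive 2 1 RR (1/2) {0} \<longrightarrow>
      (\<exists>Rs. is_bundle 1 1 Rs \<and> bsize Rs = 1/2 \<and> (\<forall>i\<in>{0}. bsubseteq Rs (RR i))) \<longrightarrow>
      (\<exists>j\<in>{0::nat}. util (RR j) ?A \<ge> 1/2)"
      using H[rule_format, of "1/2" "{0}"] by simp
    then have "\<exists>j\<in>{0::nat}. util (RR j) ?A \<ge> 1/2" using coh ex by blast
    then show False using uA0 by simp
  qed
qed

end
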